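(* Let $D$ be a cone, let $\varphi\colon D\to\overline{\mathbb{R}}_+$ be a sublinear functional, and let $\psi_1,\dots,\psi_n\colon D\to\overline{\mathbb{R}}_+$ ($n\ge1$) be linear functionals such that $\min(\psi_1(x),\dots,\psi_n(x))\le\varphi(x)$ for all $x\in D$. Then there are nonnegative real numbers $a_1,\dots,a_n$ with $\sum_{i=1}^n a_i=1$ such that for all $x\in D$ \[\min(\psi_1(x),\dots,\psi_n(x))\;\le\;\sum_{i=1}^n a_i\psi_i(x)\;\le\;\varphi(x).\]
   Context: $\overline{\mathbb{R}}_+=[0,+\infty)\cup\{+\infty\}$ with the usual order and arithmetic extended by $r+\infty=+\infty$, $r\cdot(+\infty)=+\infty$ for $r>0$, $0\cdot(+\infty)=0$. A cone is a commutative monoid $(C,+,0)$ with a scalar multiplication $[0,\infty)\times C\to C$ satisfying $r(x+y)=rx+ry$, $(r+s)x=rx+sx$, $(rs)x=r(sx)$, $1x=x$, $0x=0$ (no cancellation or additive inverses required). A functional is a map $\varphi\colon C\to\overline{\mathbb{R}}_+$. It is homogeneous if $\varphi(ra)=r\varphi(a)$ for all $a\in C$, $r\in[0,\infty)$; additive if $\varphi(a+b)=\varphi(a)+\varphi(b)$; subadditive if $\varphi(a+b)\le\varphi(a)+\varphi(b)$; linear = homogeneous and additive; sublinear = homogeneous and subadditive. *)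

theory Defs
  imports "HOL-Library.Extended_Nonnegative_Real"
begin

text \<open>A cone: carrier is the whole type 'a, with addition add, zero z and
  scalar multiplication sm by nonnegative reals (values of sm at negative
  scalars are irrelevant).\<close>
definition cone :: "('a \<Rightarrow> 'a \<Rightarrow> 'a) \<Rightarrow> 'a \<Rightarrow> (real \<Rightarrow> 'a \<Rightarrow> 'a) \<Rightarrow> bool" where
  "cone add z sm \<longleftrightarrow>
     (\<forall>x y w. add (add x y) w = add x (add y w)) \<and>
     (\<forall>x y. add x y = add y x) \<and>
     (\<forall>x. add x z = x) \<and>
     (\<forall>r x y. r \<ge> 0 \<longrightarrow> sm r (add x y) = add (sm r x) (sm r y)) \<and>
     (\<forall>r s x. r \<ge> 0 \<longrightarrow> s \<ge> 0 \<longrightarrow> sm (r + s) x = add (sm r x) (sm s x)) \<and>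
     (\<forall>r s x. r \<ge> 0 \<longrightarrow> s \<ge> 0 \<longrightarrow> sm (r * s) x = sm r (sm s x)) \<and>
     (\<forall>x. sm 1 x = x) \<and>
     (\<forall>x. sm 0 x = z)"

definition homogeneous :: "(real \<Rightarrow> 'a \<Rightarrow> 'a) \<Rightarrow> ('a \<Rightarrow> ennreal) \<Rightarrow> bool" where
  "homogeneous sm f \<longleftrightarrow> (\<forall>r x. r \<ge> 0 \<longrightarrow> f (sm r x) = ennreal r * f x)"

definition additive :: "('a \<Rightarrow> 'a \<Rightarrow> 'a) \<Rightarrow> ('a \<Rightarrow> ennreal) \<Rightarrow> bool" where
  "additive add f \<longleftrightarrow> (\<forall>x y. f (add x y) = f x + f y)"

definition subadditive :: "('a \<Rightarrow> 'a \<Rightarrow> 'a) \<Rightarrow> ('a \<Rightarrow> ennreal) \<Rightarrow> bool" where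
  "subadditive add f \<longleftrightarrow> (\<forall>x y. f (add x y) \<le> f x + f y)"

definition linear_functional where
  "linear_functional add sm f \<longleftrightarrow> homogeneous sm f \<and> additive add f"

definition sublinear_functional where
  "sublinear_functional add sm f \<longleftrightarrow> homogeneous sm f \<and> subadditive add f"

end

theory Submission
  imports Defs
begin

lemma fd:
  fixes S :: "(nat \<Rightarrow> real) set"
  assumes "\<forall>y\<in>S. \<forall>y'\<in>S. \<forall>t::real. 0 \<le> t \<and> t \<le> 1 \<longrightarrow> (\<lambda>i. t * y i + (1 - t) * y' i) \<in> S"
    and "\<forall>y\<in>S. \<exists>i\<in>{1..Suc n}. y i \<le> 0"
  shows "\<exists>a. (\<forall>i\<in>{1..Suc n}. 0 \<le> a i) \<and> sum a {1..Suc n} = 1 \<and> (\<forall>y\<in>S. (\<Sum>i=1..Suc n. a i * y i) \<le> 0)"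
  using assms
proof (induction n arbitrary: S)
  case 0
  show ?case by (rule exI[of _ "\<lambda>i. 1"]) (use 0 in auto)
next
  case (Suc n)
  note conv = Suc.prems(1) and hyp = Suc.prems(2)
  define k where "k = Suc (Suc n)"
  define m where "m y = Min ((\<lambda>i. y i) ` {1..Suc n})" for y :: "nat \<Rightarrow> real"
  have m_le: "m y \<le> y i" if "i \<in> {1..Suc n}" for y i
    unfolding m_def using that by (intro Min_le) auto
  have m_in: "\<exists>i\<in>{1..Suc n}. y i = m y" for y
  proof -
    have "m y \<in> (\<lambda>i. y i) ` {1..Suc n}" unfolding m_def by (intro Min_in) auto
    then show ?thesis by auto
  qed
  have m_conv: "t * m y + (1-t) * m y' \<le> m (\<lambda>i. t * y i + (1-t) * y' i)"
    if "0 \<le> t" "t \<le> 1" for t y y'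
  proof -
    obtain i where i: "i \<in> {1..Suc n}" "t * y i + (1-t) * y' i = m (\<lambda>i. t * y i + (1-t) * y' i)"
      using m_in[of "\<lambda>i. t * y i + (1-t) * y' i"] by auto
    have "t * m y \<le> t * y i" using m_le[OF i(1)] that by (simp add: mult_left_mono)
    moreover have "(1-t) * m y' \<le> (1-t) * y' i" using m_le[OF i(1)] that by (simp add: mult_left_mono)
    ultimately show ?thesis using i(2) by linarith
  qed
  have notin: "w \<notin> S" if "w k > 0" "m w > 0" for w
  proof
    assume "w \<in> S"
    then obtain i where i: "i \<in> {1..Suc (Suc n)}" "w i \<le> 0" using hyp by blast
    show False
    proof (cases "i = k")
      case True then show ?thesis using i that by simp
    next
      case False
      then have "i \<in> {1..Suc n}" using i(1) unfolding k_def by auto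
      then show ?thesis using m_le[of i w] i that by simp
    qed
  qed
  have key: "m y' * y k + m y * (- y' k) \<le> 0" if "y \<in> S" "y' \<in> S" "y k > 0" "y' k \<le> 0" for y y'
  proof (rule ccontr)
    define p where "p = y k"
    define q where "q = - y' k"
    define E where "E = m y' * p + m y * q"
    assume "\<not> ?thesis"
    then have E: "E > 0" unfolding E_def p_def q_def by simp
    have p: "p > 0" and q: "q \<ge> 0" using that unfolding p_def q_def by auto
    define \<delta> where "\<delta> = (if m y \<ge> 0 then 1 else E / (2 * (- m y)))"
    have d: "\<delta> > 0" using E unfolding \<delta>_def by (auto simp: field_simps)
    have dE: "E + \<delta> * m y > 0"
    proof (cases "m y \<ge> 0")
      case True then show ?thesis using E unfolding \<delta>_def by simp
    next
      case False
      then have "\<delta> * m y = - E / 2" unfolding \<delta>_def by (simp add: field_simps)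
      then show ?thesis using E by simp
    qed
    define D where "D = p + q + \<delta>"
    have D: "D > 0" using p q d unfolding D_def by simp
    define t where "t = (q + \<delta>) / D"
    have t0: "0 \<le> t" using q d D unfolding t_def by simp
    have t1: "t \<le> 1" using p D unfolding t_def D_def by simp
    have tD: "t * D = q + \<delta>" using D unfolding t_def by simp
    have tD': "(1 - t) * D = p" using D tD unfolding D_def by (simp add: algebra_simps)
    define w where "w = (\<lambda>i. t * y i + (1-t) * y' i)"
    have wS: "w \<in> S" using conv that t0 t1 unfolding w_def by blast
    have "w k * D = \<delta> * p"
    proof -
      have "w k * D = (t * D) * y k + ((1-t) * D) * y' k" unfolding w_def by (simp add: algebra_simps)
      also have "\<dots> = \<delta> * p" unfolding tD tD' p_def q_def by (simp add: algebra_simps)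
      finally show ?thesis .
    qed
    then have wk: "w k > 0" using D d p by (metis mult_pos_pos zero_less_mult_pos2)
    have "(t * m y + (1-t) * m y') * D = E + \<delta> * m y"
    proof -
      have "(t * m y + (1-t) * m y') * D = (t * D) * m y + ((1-t) * D) * m y'" by (simp add: algebra_simps)
      also have "\<dots> = E + \<delta> * m y" unfolding tD tD' E_def by (simp add: algebra_simps)
      finally show ?thesis .
    qed
    then have "t * m y + (1-t) * m y' > 0" using D dE by (metis zero_less_mult_pos2)
    then have "m w > 0" using m_conv[OF t0 t1, of y y'] unfolding w_def by linarith
    then show False using notin[of w] wk wS by blast
  qed
  show ?case
  proof (cases "\<forall>y\<in>S. y k \<le> 0")
    case True
    show ?thesis
    proof (intro exI[of _ "\<lambda>i. if i = k then 1 else 0"] conjI ballI)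
      show "sum (\<lambda>i. if i = k then 1 else 0::real) {1..Suc (Suc n)} = 1" unfolding k_def by simp
      fix y assume "y \<in> S"
      have "(\<Sum>i=1..Suc (Suc n). (if i = k then 1 else 0) * y i) = y k"
        unfolding k_def by (simp add: if_distrib cong: if_cong)
      then show "(\<Sum>i=1..Suc (Suc n). (if i = k then 1 else 0) * y i) \<le> 0" using True \<open>y \<in> S\<close> by simp
    qed auto
  next
    case False
    then obtain y0 where y0: "y0 \<in> S" "y0 k > 0" by (meson not_le)
    define Lo where "Lo = {m y / (- y k) | y. y \<in> S \<and> y k < 0}"
    define c where "c = Sup (insert 0 Lo)"
    have mpos: "m y \<le> 0" if yS: "y \<in> S" and yk: "y k > 0" for y
    proof -
      obtain i where i: "i \<in> {1..Suc (Suc n)}" "y i \<le> 0" using hyp yS by blast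
      have "i \<noteq> k"
      proof
        assume "i = k" then show False using i(2) yk by simp
      qed
      then have "i \<in> {1..Suc n}" using i(1) unfolding k_def by auto
      then have "m y \<le> y i" by (rule m_le)
      with i(2) show ?thesis by linarith
    qed
    have ub: "l \<le> - m y / y k" if "l \<in> insert 0 Lo" "y \<in> S" "y k > 0" for l y
    proof -
      have "0 \<le> - m y / y k" using mpos[OF that(2,3)] that(3) by (intro divide_nonneg_pos) auto
      moreover have "m y' / (- y' k) \<le> - m y / y k" if "y' \<in> S" "y' k < 0" for y'
      proof -
        have "m y' * y k + m y * (- y' k) \<le> 0" using key[of y y'] that \<open>y \<in> S\<close> \<open>y k > 0\<close> by simp
        then show ?thesis using that(2) \<open>y k > 0\<close> by (simp add: field_simps)
      qed
      ultimately show ?thesis using that(1) unfolding Lo_def by auto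
    qed
    have bdd: "bdd_above (insert 0 Lo)" using ub y0 unfolding bdd_above_def by blast
    have c0: "0 \<le> c" unfolding c_def using bdd by (intro cSup_upper) auto
    have cle: "c \<le> - m y / y k" if "y \<in> S" "y k > 0" for y
      unfolding c_def using ub[OF _ that] by (intro cSup_least) auto
    have cge: "m y / (- y k) \<le> c" if "y \<in> S" "y k < 0" for y
      unfolding c_def using bdd that by (intro cSup_upper) (auto simp: Lo_def)
    have main: "m y + c * y k \<le> 0" if "y \<in> S" for y
    proof -
      consider "y k > 0" | "y k < 0" | "y k = 0" by linarith
      then show ?thesis
      proof cases
        case 1 then show ?thesis using cle[OF that 1] by (simp add: field_simps)
      next
        case 2 then show ?thesis using cge[OF that 2] by (simp add: field_simps)
      next
        case 3 then show ?thesis using key[OF y0(1) that y0(2)] y0(2) by (simp add: zero_le_mult_iff mult_le_0_iff)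
      qed
    qed
    define f where "f y = (\<lambda>i. y i + c * y k)" for y :: "nat \<Rightarrow> real"
    have "\<exists>b. (\<forall>i\<in>{1..Suc n}. 0 \<le> b i) \<and> sum b {1..Suc n} = 1 \<and> (\<forall>y\<in>f ` S. (\<Sum>i=1..Suc n. b i * y i) \<le> 0)"
    proof (rule Suc.IH; intro ballI allI impI)
      fix u v and t :: real assume u: "u \<in> f ` S" and v: "v \<in> f ` S" and t: "0 \<le> t \<and> t \<le> 1"
      obtain y where y: "y \<in> S" "u = f y" using u by blast
      obtain y' where y': "y' \<in> S" "v = f y'" using v by blast
      have "(\<lambda>i. t * y i + (1 - t) * y' i) \<in> S" using conv y y' t by blast
      moreover have "(\<lambda>i. t * u i + (1 - t) * v i) = f (\<lambda>i. t * y i + (1 - t) * y' i)"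
        unfolding y y' f_def by (auto simp: algebra_simps)
      ultimately show "(\<lambda>i. t * u i + (1 - t) * v i) \<in> f ` S" by blast
    next
      fix u assume "u \<in> f ` S"
      then obtain y where y: "y \<in> S" "u = f y" by blast
      obtain i where i: "i \<in> {1..Suc n}" "y i = m y" using m_in by blast
      show "\<exists>i\<in>{1..Suc n}. u i \<le> 0" using i main[OF y(1)] unfolding y f_def by (intro bexI[of _ i]) auto
    qed
    then obtain b where b: "\<forall>i\<in>{1..Suc n}. 0 \<le> b i" "sum b {1..Suc n} = 1"
      "\<forall>y\<in>f ` S. (\<Sum>i=1..Suc n. b i * y i) \<le> 0" by blast
    define a where "a i = (if i = k then c else b i) / (1 + c)" for i
    have sa: "sum g {1..Suc (Suc n)} = sum g {1..Suc n} + g k" for g :: "nat \<Rightarrow> real"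
      unfolding k_def by simp
    have ab: "sum g {1..Suc n} = sum (\<lambda>i. (b i * h i)) {1..Suc n} / (1 + c)"
      if "\<And>i. i \<noteq> k \<Longrightarrow> g i = b i * h i / (1 + c)" for g h
    proof -
      have "sum g {1..Suc n} = sum (\<lambda>i. b i * h i / (1 + c)) {1..Suc n}"
        using that by (intro sum.cong) (auto simp: k_def)
      then show ?thesis by (simp only: sum_divide_distrib)
    qed
    show ?thesis
    proof (intro exI[of _ a] conjI ballI)
      fix i assume "i \<in> {1..Suc (Suc n)}"
      then show "0 \<le> a i" using b(1) c0 unfolding a_def k_def by (auto simp: less_Suc_eq_le)
    next
      have "sum a {1..Suc n} = sum (\<lambda>i. b i * 1) {1..Suc n} / (1 + c)"
        by (rule ab) (simp add: a_def)
      then show "sum a {1..Suc (Suc n)} = 1" unfolding sa using b(2) c0 by (simp add: a_def field_simps)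
    next
      fix y assume y: "y \<in> S"
      have "sum (\<lambda>i. a i * y i) {1..Suc n} = sum (\<lambda>i. b i * y i) {1..Suc n} / (1 + c)"
        by (rule ab) (simp add: a_def)
      then have "(\<Sum>i=1..Suc (Suc n). a i * y i) = (sum (\<lambda>i. b i * y i) {1..Suc n} + c * y k) / (1 + c)"
        unfolding sa by (simp add: a_def add_divide_distrib)
      also have "sum (\<lambda>i. b i * y i) {1..Suc n} + c * y k = (\<Sum>i=1..Suc n. b i * f y i)"
      proof -
        have "(\<Sum>i=1..Suc n. b i * f y i) = sum (\<lambda>i. b i * y i) {1..Suc n} + sum b {1..Suc n} * (c * y k)"
          unfolding f_def by (simp only: distrib_left sum.distrib sum_distrib_right)
        then show ?thesis using b(2) by simp
      qed
      finally have "(\<Sum>i=1..Suc (Suc n). a i * y i) = (\<Sum>i=1..Suc n. b i * f y i) / (1 + c)" .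
      moreover have "(\<Sum>i=1..Suc n. b i * f y i) \<le> 0" using b(3) y by blast
      ultimately show "(\<Sum>i=1..Suc (Suc n). a i * y i) \<le> 0" using c0 by (simp add: divide_nonpos_pos)
    qed
  qed
qed


theorem proposition2p8:
  fixes add :: "'a \<Rightarrow> 'a \<Rightarrow> 'a" and z :: 'a and sm :: "real \<Rightarrow> 'a \<Rightarrow> 'a"
    and \<phi> :: "'a \<Rightarrow> ennreal" and \<psi> :: "nat \<Rightarrow> 'a \<Rightarrow> ennreal" and n :: nat
  assumes "cone add z sm"
    and "sublinear_functional add sm \<phi>"
    and "n \<ge> 1"
    and "\<And>i. i \<in> {1..n} \<Longrightarrow> linear_functional add sm (\<psi> i)"
    and "\<And>x. Min ((\<lambda>i. \<psi> i x) ` {1..n}) \<le> \<phi> x"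
  shows "\<exists>a :: nat \<Rightarrow> real. (\<forall>i\<in>{1..n}. a i \<ge> 0) \<and> (\<Sum>i=1..n. a i) = 1 \<and>
           (\<forall>x. Min ((\<lambda>i. \<psi> i x) ` {1..n}) \<le> (\<Sum>i=1..n. ennreal (a i) * \<psi> i x) \<and>
                (\<Sum>i=1..n. ennreal (a i) * \<psi> i x) \<le> \<phi> x)"
proof -
  note cone = assms(1)[unfolded cone_def]
  have comm: "add x y = add y x" for x y using cone by blast
  have zero: "add x z = x" for x using cone by blast
  have sm0: "sm 0 x = z" for x using cone by blast
  have sm1: "sm 1 x = x" for x using cone by blast
  have phom: "\<phi> (sm r x) = ennreal r * \<phi> x" if "r \<ge> 0" for r x
    using assms(2) that unfolding sublinear_functional_def homogeneous_def by blast
  have psub: "\<phi> (add x y) \<le> \<phi> x + \<phi> y" for x y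
    using assms(2) unfolding sublinear_functional_def subadditive_def by blast
  have qhom: "\<psi> i (sm r x) = ennreal r * \<psi> i x" if "r \<ge> 0" "i \<in> {1..n}" for r x i
    using assms(4)[OF that(2)] that(1) unfolding linear_functional_def homogeneous_def by blast
  have qadd: "\<psi> i (add x y) = \<psi> i x + \<psi> i y" if "i \<in> {1..n}" for x y i
    using assms(4)[OF that] unfolding linear_functional_def additive_def by blast
  obtain n' where n: "n = Suc n'" using assms(3) by (cases n) auto
  define S where "S = {y. \<exists>x. \<phi> x \<noteq> top \<and> (\<forall>i\<in>{1..n}. \<psi> i x = top \<or> y i \<le> enn2real (\<psi> i x) - enn2real (\<phi> x))}"
  have conv: "\<forall>y\<in>S. \<forall>y'\<in>S. \<forall>t::real. 0 \<le> t \<and> t \<le> 1 \<longrightarrow> (\<lambda>i. t * y i + (1 - t) * y' i) \<in> S"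
  proof (intro ballI allI impI)
    fix y y' and t :: real assume yS: "y \<in> S" and y'S: "y' \<in> S" and t: "0 \<le> t \<and> t \<le> 1"
    have "t = 0 \<or> t = 1 \<or> (0 < t \<and> t < 1)" using t by auto
    then consider "t = 0" | "t = 1" | "0 < t" "t < 1" by blast
    then show "(\<lambda>i. t * y i + (1 - t) * y' i) \<in> S"
    proof cases
      case 1 then show ?thesis using y'S by simp
    next
      case 2 then show ?thesis using yS by simp
    next
      case 3
      obtain x where x: "\<phi> x \<noteq> top" "\<forall>i\<in>{1..n}. \<psi> i x = top \<or> y i \<le> enn2real (\<psi> i x) - enn2real (\<phi> x)"
        using yS unfolding S_def by blast
      obtain x' where x': "\<phi> x' \<noteq> top" "\<forall>i\<in>{1..n}. \<psi> i x' = top \<or> y' i \<le> enn2real (\<psi> i x') - enn2real (\<phi> x')"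
        using y'S unfolding S_def by blast
      define x'' where "x'' = add (sm t x) (sm (1-t) x')"
      have t0: "0 \<le> t" and t1: "0 \<le> 1 - t" using 3 by auto
      define F where "F = enn2real (\<phi> x)"
      define F' where "F' = enn2real (\<phi> x')"
      have F: "\<phi> x = ennreal F" "F \<ge> 0" using x(1) unfolding F_def by (auto simp: less_top)
      have F': "\<phi> x' = ennreal F'" "F' \<ge> 0" using x'(1) unfolding F'_def by (auto simp: less_top)
      have "\<phi> x'' \<le> ennreal t * \<phi> x + ennreal (1-t) * \<phi> x'"
        using psub[of "sm t x" "sm (1-t) x'"] unfolding x''_def phom[OF t0] phom[OF t1] .
      also have "\<dots> = ennreal (t * F + (1-t) * F')"
        unfolding F(1) F'(1) using t0 t1 F'(2) F(2) by (simp add: ennreal_mult ennreal_plus)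
      finally have px: "\<phi> x'' \<le> ennreal (t * F + (1-t) * F')" .
      have ptop: "\<phi> x'' \<noteq> top"
      proof
        assume "\<phi> x'' = top"
        with px show False by (simp add: top_unique)
      qed
      have pF: "enn2real (\<phi> x'') \<le> t * F + (1-t) * F'"
        using px t0 t1 F(2) F'(2) by (intro enn2real_leI) auto
      show ?thesis unfolding S_def
      proof (intro CollectI exI[of _ x''] conjI ballI ptop)
        fix i assume i: "i \<in> {1..n}"
        have qx: "\<psi> i x'' = ennreal t * \<psi> i x + ennreal (1-t) * \<psi> i x'"
          unfolding x''_def qadd[OF i] qhom[OF t0 i] qhom[OF t1 i] ..
        show "\<psi> i x'' = top \<or> t * y i + (1 - t) * y' i \<le> enn2real (\<psi> i x'') - enn2real (\<phi> x'')"
        proof (cases "\<psi> i x'' = top")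
          case True then show ?thesis by simp
        next
          case False
          have "\<psi> i x \<noteq> top" using False 3 unfolding qx by (auto simp: ennreal_mult_eq_top_iff)
          moreover have "\<psi> i x' \<noteq> top" using False 3 unfolding qx by (auto simp: ennreal_mult_eq_top_iff)
          ultimately have yi: "y i \<le> enn2real (\<psi> i x) - F" and y'i: "y' i \<le> enn2real (\<psi> i x') - F'"
            using x(2) x'(2) i unfolding F_def F'_def by auto
          define P where "P = enn2real (\<psi> i x)"
          define P' where "P' = enn2real (\<psi> i x')"
          have P: "\<psi> i x = ennreal P" "P \<ge> 0" using \<open>\<psi> i x \<noteq> top\<close> unfolding P_def by (auto simp: less_top)
          have P': "\<psi> i x' = ennreal P'" "P' \<ge> 0" using \<open>\<psi> i x' \<noteq> top\<close> unfolding P'_def by (auto simp: less_top)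
          have qe: "\<psi> i x'' = ennreal (t * P + (1-t) * P')"
            unfolding qx P(1) P'(1) using t0 t1 P(2) P'(2) by (simp add: ennreal_mult ennreal_plus)
          have eq: "enn2real (\<psi> i x'') = t * P + (1-t) * P'"
            unfolding qe by (rule enn2real_ennreal) (use t0 t1 P(2) P'(2) in simp)
          have "t * y i \<le> t * (P - F)" using yi t0 unfolding P_def by (simp add: mult_left_mono)
          moreover have "(1-t) * y' i \<le> (1-t) * (P' - F')" using y'i t1 unfolding P'_def by (simp add: mult_left_mono)
          ultimately show ?thesis using pF unfolding eq by (simp add: algebra_simps)
        qed
      qed
    qed
  qed
  have hyp: "\<forall>y\<in>S. \<exists>i\<in>{1..Suc n'}. y i \<le> 0"
  proof
    fix y assume "y \<in> S"
    then obtain x where x: "\<phi> x \<noteq> top" "\<forall>i\<in>{1..n}. \<psi> i x = top \<or> y i \<le> enn2real (\<psi> i x) - enn2real (\<phi> x)"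
      unfolding S_def by blast
    have "Min ((\<lambda>i. \<psi> i x) ` {1..n}) \<in> (\<lambda>i. \<psi> i x) ` {1..n}" using n by (intro Min_in) auto
    then obtain i where i: "i \<in> {1..n}" "\<psi> i x = Min ((\<lambda>i. \<psi> i x) ` {1..n})" by auto
    have le: "\<psi> i x \<le> \<phi> x" using i(2) assms(5)[of x] by simp
    then have "\<psi> i x \<noteq> top" using x(1) by (metis top_unique)
    moreover have "enn2real (\<psi> i x) \<le> enn2real (\<phi> x)" using le x(1) by (intro enn2real_mono) (auto simp: less_top)
    ultimately have "y i \<le> 0" using x(2) i(1) by fastforce
    then show "\<exists>i\<in>{1..Suc n'}. y i \<le> 0" using i(1) n by blast
  qed
  obtain a where a0: "\<forall>i\<in>{1..n}. 0 \<le> a i" and a1: "sum a {1..n} = 1"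
    and aS: "\<forall>y\<in>S. (\<Sum>i=1..n. a i * y i) \<le> 0"
    using fd[OF conv hyp] unfolding n by blast
  show ?thesis
  proof (intro exI[of _ a] conjI allI a0 a1)
    fix x
    let ?M = "Min ((\<lambda>i. \<psi> i x) ` {1..n})"
    have "(\<Sum>i=1..n. ennreal (a i) * ?M) \<le> (\<Sum>i=1..n. ennreal (a i) * \<psi> i x)"
      by (intro sum_mono mult_left_mono) auto
    moreover have "(\<Sum>i=1..n. ennreal (a i) * ?M) = ?M"
    proof -
      have "(\<Sum>i=1..n. ennreal (a i)) = ennreal (sum a {1..n})" using a0 by (intro sum_ennreal) auto
      then have "(\<Sum>i=1..n. ennreal (a i)) = 1" using a1 by simp
      then show ?thesis by (simp only: sum_distrib_right[symmetric]) simp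
    qed
    ultimately show "?M \<le> (\<Sum>i=1..n. ennreal (a i) * \<psi> i x)" by simp
  next
    fix x
    show "(\<Sum>i=1..n. ennreal (a i) * \<psi> i x) \<le> \<phi> x"
    proof (cases "\<phi> x = top")
      case True then show ?thesis by simp
    next
      case False
      define F where "F = enn2real (\<phi> x)"
      have F: "\<phi> x = ennreal F" "F \<ge> 0" using False unfolding F_def by (auto simp: less_top)
      show ?thesis
      proof (cases "\<exists>i\<in>{1..n}. a i > 0 \<and> \<psi> i x = top")
        case True
        then obtain j where j: "j \<in> {1..n}" "a j > 0" "\<psi> j x = top" by blast
        define y where "y = (\<lambda>k. if k = j then (F + 1) / a j else - F)"
        have "y \<in> S" unfolding S_def
        proof (intro CollectI exI[of _ x] conjI ballI False)
          fix i assume "i \<in> {1..n}"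
          show "\<psi> i x = top \<or> y i \<le> enn2real (\<psi> i x) - enn2real (\<phi> x)"
            using j(3) unfolding y_def F_def by auto
        qed
        then have le: "(\<Sum>i=1..n. a i * y i) \<le> 0" using aS by blast
        have "(\<Sum>i=1..n. a i * y i) = (\<Sum>i=1..n. a i * (- F) + (if i = j then a i * ((F + 1) / a j + F) else 0))"
          unfolding y_def by (intro sum.cong) (auto simp: algebra_simps)
        also have "\<dots> = - F + a j * ((F + 1) / a j + F)"
        proof -
          have e1: "(\<Sum>i=1..n. a i * (- F)) = - F" using a1 by (simp only: sum_distrib_right[symmetric])
          have e2: "(\<Sum>i=1..n. (if i = j then a i * ((F + 1) / a j + F) else 0)) = a j * ((F + 1) / a j + F)"
            using j(1) by (simp only: sum.delta finite_atLeastAtMost) simp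
          show ?thesis by (simp only: sum.distrib e1 e2)
        qed
        also have "\<dots> = 1 + a j * F" using j(2) by (simp add: field_simps)
        finally have "(\<Sum>i=1..n. a i * y i) = 1 + a j * F" .
        moreover have "a j * F \<ge> 0" using j(2) F(2) by simp
        ultimately show ?thesis using le by linarith
      next
        case nT: False
        define y where "y = (\<lambda>k. enn2real (\<psi> k x) - F)"
        have "y \<in> S" unfolding S_def
          by (intro CollectI exI[of _ x] conjI ballI False) (auto simp: y_def F_def)
        then have le: "(\<Sum>i=1..n. a i * y i) \<le> 0" using aS by blast
        have "(\<Sum>i=1..n. a i * y i) = (\<Sum>i=1..n. a i * enn2real (\<psi> i x)) - F"
        proof -
          have "(\<Sum>i=1..n. a i * F) = F" using a1 by (simp only: sum_distrib_right[symmetric] mult_1)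
          then show ?thesis unfolding y_def by (simp only: right_diff_distrib sum_subtractf)
        qed
        with le have sle: "(\<Sum>i=1..n. a i * enn2real (\<psi> i x)) \<le> F" by simp
        have "(\<Sum>i=1..n. ennreal (a i) * \<psi> i x) = (\<Sum>i=1..n. ennreal (a i * enn2real (\<psi> i x)))"
        proof (intro sum.cong refl)
          fix i assume i: "i \<in> {1..n}"
          show "ennreal (a i) * \<psi> i x = ennreal (a i * enn2real (\<psi> i x))"
          proof (cases "a i = 0")
            case True then show ?thesis by simp
          next
            case False
            then have "a i > 0" using a0 i by force
            then have "\<psi> i x \<noteq> top" using nT i by blast
            then show ?thesis using a0 i by (simp add: ennreal_mult less_top)
          qed
        qed
        also have "\<dots> = ennreal (\<Sum>i=1..n. a i * enn2real (\<psi> i x))"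
          using a0 by (intro sum_ennreal) auto
        also have "\<dots> \<le> \<phi> x" unfolding F(1) using sle by (intro ennreal_leI)
        finally show ?thesis .
      qed
    qed
  qed
qed

end
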